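(* Let $\mathfrak{A}$ be a $(\circ,\wedge,\mathsf{A})$-algebra that is completely representable by partial functions. Then composition in $\mathfrak{A}$ is completely left-distributive over joins and completely left-distributive over meets: for every $a\in\mathfrak{A}$, (i) for every $S\subseteq\mathfrak{A}$ such that $\bigvee S$ exists, $\bigvee\{a\circ s\mid s\in S\}$ exists and equals $a\circ\bigvee S$; (ii) for every nonempty $S\subseteq\mathfrak{A}$ such that $\bigwedge S$ exists, $\bigwedge\{a\circ s\mid s\in S\}$ exists and equals $a\circ\bigwedge S$.
   Context: A $(\circ,\wedge,\mathsf{A})$-algebra is a set with two binary operations $\circ,\wedge$ and one unary operation $\mathsf{A}$. An algebra of partial functions of this signature is a set of partial functions, with base $X$ the union of all their domains and ranges, closed under: composition $f\circ g=\{(x,z)\mid \exists y\,(x,y)\in f,(y,z)\in g\}$ (apply $f$ first, then $g$); intersection; antidomain $\mathsf{A}(f)=\{(x,x)\mid x\in X, x\notin\mathrm{dom}(f)\}$. A representation by partial functions is an isomorphism onto such an algebra. The order is $a\le b\iff a\wedge b=a$. A representation $\theta$ is complete if for every nonempty $S$ with $\bigwedge S$ existing, $\theta(\bigwedge S)=\bigcap\theta[S]$ (equivalently, for every $S$ with $\bigvee S$ existing, $\theta(\bigvee S)=\bigcup\theta[S]$). An algebra is completely representable if it has a complete representation. *)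

theory Defs
  imports Main
begin

text \<open>A (comp, meet, A)-algebra is modelled by a type 'a together with two binary
operations cmp, mt and a unary operation ad (antidomain).
The order: a \<le> b iff a \<wedge> b = a.\<close>

definition alg_le :: "('a \<Rightarrow> 'a \<Rightarrow> 'a) \<Rightarrow> 'a \<Rightarrow> 'a \<Rightarrow> bool" where
  "alg_le mt a b \<longleftrightarrow> mt a b = a"

definition is_join :: "('a \<Rightarrow> 'a \<Rightarrow> 'a) \<Rightarrow> 'a set \<Rightarrow> 'a \<Rightarrow> bool" where
  "is_join mt S j \<longleftrightarrow> (\<forall>s\<in>S. alg_le mt s j) \<and>
     (\<forall>u. (\<forall>s\<in>S. alg_le mt s u) \<longrightarrow> alg_le mt j u)"

definition is_meet :: "('a \<Rightarrow> 'a \<Rightarrow> 'a) \<Rightarrow> 'a set \<Rightarrow> 'a \<Rightarrow> bool" where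
  "is_meet mt S m \<longleftrightarrow> (\<forall>s\<in>S. alg_le mt m s) \<and>
     (\<forall>l. (\<forall>s\<in>S. alg_le mt l s) \<longrightarrow> alg_le mt l m)"

definition rep_base :: "('a \<Rightarrow> ('b \<times> 'b) set) \<Rightarrow> 'b set" where
  "rep_base \<theta> = (\<Union>a. Domain (\<theta> a) \<union> Range (\<theta> a))"

text \<open>Composition f;g applies f first, then g: this is relcomp (O).
Antidomain: identity on the base points outside the domain.\<close>
definition pf_antidom :: "'b set \<Rightarrow> ('b \<times> 'b) set \<Rightarrow> ('b \<times> 'b) set" where
  "pf_antidom X f = Id_on (X - Domain f)"

definition pf_representation ::
  "('a \<Rightarrow> 'a \<Rightarrow> 'a) \<Rightarrow> ('a \<Rightarrow> 'a \<Rightarrow> 'a) \<Rightarrow> ('a \<Rightarrow> 'a) \<Rightarrow> ('a \<Rightarrow> ('b \<times> 'b) set) \<Rightarrow> bool" where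
  "pf_representation cmp mt ad \<theta> \<longleftrightarrow>
     inj \<theta> \<and> (\<forall>a. single_valued (\<theta> a)) \<and>
     (\<forall>a b. \<theta> (cmp a b) = \<theta> a O \<theta> b) \<and>
     (\<forall>a b. \<theta> (mt a b) = \<theta> a \<inter> \<theta> b) \<and>
     (\<forall>a. \<theta> (ad a) = pf_antidom (rep_base \<theta>) (\<theta> a))"

definition complete_pf_representation ::
  "('a \<Rightarrow> 'a \<Rightarrow> 'a) \<Rightarrow> ('a \<Rightarrow> 'a \<Rightarrow> 'a) \<Rightarrow> ('a \<Rightarrow> 'a) \<Rightarrow> ('a \<Rightarrow> ('b \<times> 'b) set) \<Rightarrow> bool" where
  "complete_pf_representation cmp mt ad \<theta> \<longleftrightarrow>
     pf_representation cmp mt ad \<theta> \<and>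
     (\<forall>S m. S \<noteq> {} \<longrightarrow> is_meet mt S m \<longrightarrow> \<theta> m = \<Inter> (\<theta> ` S))"

end

theory Submission
  imports Defs
begin

lemma le_iff:
  assumes "pf_representation cmp mt ad \<theta>"
  shows "alg_le mt a b \<longleftrightarrow> \<theta> a \<subseteq> \<theta> b"
proof -
  have inj: "inj \<theta>" and m: "\<And>a b. \<theta> (mt a b) = \<theta> a \<inter> \<theta> b"
    using assms unfolding pf_representation_def by auto
  have "alg_le mt a b \<longleftrightarrow> \<theta> (mt a b) = \<theta> a"
    unfolding alg_le_def using inj by (metis injD)
  also have "\<dots> \<longleftrightarrow> \<theta> a \<subseteq> \<theta> b" using m by auto
  finally show ?thesis .
qed

lemma sv_comp_Inter:
  assumes "single_valued f" "G \<noteq> {}"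
  shows "f O \<Inter> G = \<Inter> ((\<lambda>g. f O g) ` G)"
proof
  show "f O \<Inter> G \<subseteq> \<Inter> ((\<lambda>g. f O g) ` G)" by blast
  show "\<Inter> ((\<lambda>g. f O g) ` G) \<subseteq> f O \<Inter> G"
  proof clarify
    fix x z assume h: "(x, z) \<in> \<Inter> ((\<lambda>g. f O g) ` G)"
    obtain g0 where "g0 \<in> G" using assms(2) by blast
    then obtain y where y: "(x,y) \<in> f" using h by blast
    have "\<forall>g\<in>G. (y,z) \<in> g"
    proof
      fix g assume "g \<in> G"
      then obtain y' where "(x,y') \<in> f" "(y',z) \<in> g" using h by blast
      then show "(y,z) \<in> g" using y assms(1) by (metis single_valuedD)
    qed
    then show "(x,z) \<in> f O \<Inter> G" using y by blast
  qed
qed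

lemma join_union:
  assumes c: "complete_pf_representation cmp mt ad \<theta>" and J: "is_join mt S j"
  shows "\<theta> j = \<Union> (\<theta> ` S)"
proof -
  have r: "pf_representation cmp mt ad \<theta>" using c unfolding complete_pf_representation_def by auto
  have cmpr: "\<And>a b. \<theta> (cmp a b) = \<theta> a O \<theta> b"
   and adr: "\<And>a. \<theta> (ad a) = Id_on (rep_base \<theta> - Domain (\<theta> a))"
   and sv: "\<And>a. single_valued (\<theta> a)"
    using r unfolding pf_representation_def pf_antidom_def by auto
  have comp: "\<And>S m. S \<noteq> {} \<Longrightarrow> is_meet mt S m \<Longrightarrow> \<theta> m = \<Inter> (\<theta> ` S)"
    using c unfolding complete_pf_representation_def by auto
  have le: "\<And>a b. alg_le mt a b \<longleftrightarrow> \<theta> a \<subseteq> \<theta> b" using le_iff[OF r] .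
  have ub: "\<And>s. s \<in> S \<Longrightarrow> \<theta> s \<subseteq> \<theta> j" using J le unfolding is_join_def by auto
  have lub: "\<And>u. (\<forall>s\<in>S. \<theta> s \<subseteq> \<theta> u) \<Longrightarrow> \<theta> j \<subseteq> \<theta> u"
    using J le unfolding is_join_def by auto
  have X: "\<And>a. Domain (\<theta> a) \<subseteq> rep_base \<theta>" unfolding rep_base_def by auto
  show ?thesis
  proof (cases "S = {}")
    case True
    have "\<theta> j \<subseteq> \<theta> (cmp (ad j) j)" using lub True by auto
    also have "\<theta> (cmp (ad j) j) = {}" using cmpr adr by auto
    finally show ?thesis using True by auto
  next
    case False
    have meet: "is_meet mt (ad ` S) (ad j)"
      unfolding is_meet_def le
    proof (intro conjI ballI allI impI)
      fix t assume "t \<in> ad ` S"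
      then obtain s where s: "s \<in> S" "t = ad s" by auto
      have "Domain (\<theta> s) \<subseteq> Domain (\<theta> j)" using ub[OF s(1)] by auto
      then show "\<theta> (ad j) \<subseteq> \<theta> t" using s adr by auto
    next
      fix l assume hl: "\<forall>t\<in>ad ` S. \<theta> l \<subseteq> \<theta> t"
      obtain s0 where s0: "s0 \<in> S" using False by auto
      have lX: "\<theta> l \<subseteq> Id_on (rep_base \<theta>)" using hl s0 adr by fastforce
      have disj: "\<And>s. s \<in> S \<Longrightarrow> Domain (\<theta> l) \<inter> Domain (\<theta> s) = {}"
        using hl adr by fastforce
      have "\<forall>s\<in>S. \<theta> s \<subseteq> \<theta> (cmp (ad l) j)"
      proof
        fix s assume s: "s \<in> S"
        show "\<theta> s \<subseteq> \<theta> (cmp (ad l) j)"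
        proof clarify
          fix x y assume xy: "(x,y) \<in> \<theta> s"
          have "x \<in> rep_base \<theta>" using X xy by blast
          moreover have "x \<notin> Domain (\<theta> l)" using disj[OF s] xy by blast
          moreover have "(x,y) \<in> \<theta> j" using ub[OF s] xy by blast
          ultimately show "(x,y) \<in> \<theta> (cmp (ad l) j)" using cmpr adr by auto
        qed
      qed
      then have "\<theta> j \<subseteq> \<theta> (cmp (ad l) j)" using lub by blast
      then have "Domain (\<theta> j) \<inter> Domain (\<theta> l) = {}" using cmpr adr by fastforce
      then show "\<theta> l \<subseteq> \<theta> (ad j)" using lX adr by fastforce
    qed
    have eq: "\<theta> (ad j) = \<Inter> (\<theta> ` ad ` S)" using comp[OF _ meet] False by auto
    show ?thesis
    proof
      show "\<Union> (\<theta> ` S) \<subseteq> \<theta> j" using ub by auto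
      show "\<theta> j \<subseteq> \<Union> (\<theta> ` S)"
      proof clarify
        fix x y assume xy: "(x,y) \<in> \<theta> j"
        have xX: "x \<in> rep_base \<theta>" using X xy by blast
        show "(x,y) \<in> \<Union> (\<theta> ` S)"
        proof (cases "\<exists>s\<in>S. x \<in> Domain (\<theta> s)")
          case True
          then obtain s y' where s: "s \<in> S" "(x,y') \<in> \<theta> s" by auto
          then have "(x,y') \<in> \<theta> j" using ub by blast
          then have "y' = y" using xy sv by (metis single_valuedD)
          then show ?thesis using s by auto
        next
          case nd: False
          have "(x,x) \<in> \<theta> (ad j)" unfolding eq using nd xX adr by auto
          then show ?thesis using adr xy by auto
        qed
      qed
    qed
  qed
qed

theorem mainTheorem10:
  fixes cmp mt :: "'a \<Rightarrow> 'a \<Rightarrow> 'a" and ad :: "'a \<Rightarrow> 'a"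
    and \<theta> :: "'a \<Rightarrow> ('b \<times> 'b) set"
  assumes "complete_pf_representation cmp mt ad \<theta>"
  shows "(\<forall>a S j. is_join mt S j \<longrightarrow> is_join mt ((\<lambda>s. cmp a s) ` S) (cmp a j))
       \<and> (\<forall>a S m. S \<noteq> {} \<longrightarrow> is_meet mt S m \<longrightarrow> is_meet mt ((\<lambda>s. cmp a s) ` S) (cmp a m))"
proof -
  have r: "pf_representation cmp mt ad \<theta>" using assms unfolding complete_pf_representation_def by auto
  have cmpr: "\<And>a b. \<theta> (cmp a b) = \<theta> a O \<theta> b"
   and sv: "\<And>a. single_valued (\<theta> a)"
    using r unfolding pf_representation_def by auto
  have comp: "\<And>S m. S \<noteq> {} \<Longrightarrow> is_meet mt S m \<Longrightarrow> \<theta> m = \<Inter> (\<theta> ` S)"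
    using assms unfolding complete_pf_representation_def by auto
  have le: "\<And>a b. alg_le mt a b \<longleftrightarrow> \<theta> a \<subseteq> \<theta> b" using le_iff[OF r] .
  have P1: "is_join mt ((\<lambda>s. cmp a s) ` S) (cmp a j)" if J: "is_join mt S j" for a S j
  proof -
    have e: "\<theta> (cmp a j) = \<Union> ((\<lambda>s. \<theta> (cmp a s)) ` S)"
      using join_union[OF assms J] cmpr by auto
    show ?thesis unfolding is_join_def le e by blast
  qed
  have P2: "is_meet mt ((\<lambda>s. cmp a s) ` S) (cmp a m)" if ne: "S \<noteq> {}" and M: "is_meet mt S m" for a S m
  proof -
    have "\<theta> (cmp a m) = \<theta> a O \<Inter> (\<theta> ` S)" using comp[OF ne M] cmpr by auto
    also have "\<dots> = \<Inter> ((\<lambda>g. \<theta> a O g) ` \<theta> ` S)" using sv_comp_Inter[OF sv, of "\<theta> ` S" a] ne by simp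
    finally have e: "\<theta> (cmp a m) = \<Inter> ((\<lambda>s. \<theta> (cmp a s)) ` S)" using cmpr by (simp add: image_image)
    show ?thesis unfolding is_meet_def le e by blast
  qed
  show ?thesis using P1 P2 by blast
qed

end
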